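(* There exists a two-way optical interference automaton (2OIA) that recognizes the language $\{a^nb^{n^2}\mid n\in\mathbb{N}\}$ in $O(|w|^3)$ time, where $|w|$ is the length of the input $w$.
   Context: A two-way optical interference automaton (2OIA) is a deterministic machine with finite state set $Q$, start state $q_0$, accepting and rejecting states, finite input alphabet $\Sigma$, and tape alphabet $\Gamma=\Sigma\cup\{\text{¢},\$\}$. On input $w=w_1\cdots w_n$ the read-only tape holds ¢$w_1\cdots w_n\$$ in cells $0,1,\dots,n+1$, scanned by a two-way head. For each cell $m$ there is a monochromatic point light source at the point $(m,0)$ of the plane; all sources have the same wavelength $\lambda$ and the same initial amplitude $A_0$, and each source is at any moment either switched off or switched on with initial phase $0$ or $\pi$. A detector is located at a grid point $(j,k)$ with $j,k\in\{0,\tfrac12,1,\tfrac32,\dots,n+1\}$, pointing towards the source array; its field of vision is the cone making angle $\pi/4$ with the vertical line through it, so it sees exactly the sources at $(m,0)$ with $|m-j|\le k$. The resultant wave at the detector is $\sum A_0 r_m^{-1}e^{i(\phi_m+2\pi r_m/\lambda)}$, summed over the switched-on sources it sees, where $r_m$ is the distance from the source to the detector and $\phi_m\in\{0,\pi\}$ the source's phase; the detector outputs $\underline{1}$ if this resultant is nonzero and $\underline{0}$ otherwise. The transition function $\delta:Q\times\Gamma\times\{\underline0,\underline1\}\to Q\times\{\text{left},\text{right},\text{stay}\}\times\{\text{left},\text{right},\text{up},\text{down},\text{stay}\}\times\{\mathrm{toggle}(0),\mathrm{toggle}(\pi),-\}$ maps (state, scanned symbol, detector output) to a new state, a move of the head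 by one cell, a move of the detector by one grid step (of length $1/2$), and an action on the source of the currently scanned cell: $\mathrm{toggle}(\phi)$ switches it on with phase $\phi$ if it is off and switches it off if it is on; $-$ does nothing. Initially all sources are off, the machine is in $q_0$, the head is on cell $0$, and the detector is at a prescribed initial grid position. For a given source, a maximal sequence of toggles at consecutive time steps is called non-transient if its length is odd; there is a constant $k$ such that the machine crashes if it attempts a non-transient toggle sequence on a single source for the $(k+1)$-th time. The machine accepts when it is in an accepting state with detector output $\underline0$. Its running time is the total number of moves made by the head plus the number of moves made by the detector. A 2OIA recognizes a language $L$ if it accepts every input in $L$ and rejects every input not in $L$. *)

theory Defs
  imports Complex_Main
begin

datatype ab = A | B

datatype 'a tsym = LEnd | Sym 'a | REnd

datatype hmove = HLeft | HRight | HStay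
datatype dmove = DLeft | DRight | DUp | DDown | DStay

datatype phase = Ph0 | PhPi

datatype action = Toggle phase | NoAct

fun phase_val :: "phase \<Rightarrow> real" where
  "phase_val Ph0 = 0"
| "phase_val PhPi = pi"

text \<open>A machine: states are natural numbers drawn from the finite set Q.
  lam is the common wavelength, amp the common initial amplitude A_0, and
  kmax the constant k bounding non-transient toggle sequences per source.\<close>
record 'a oia =
  Q :: "nat set"
  q0 :: nat
  Acc :: "nat set"
  Rej :: "nat set"
  delta :: "nat \<Rightarrow> 'a tsym \<Rightarrow> bool \<Rightarrow> nat \<times> hmove \<times> dmove \<times> action"
  lam :: real
  amp :: real
  kmax :: nat

definition wf_oia :: "'a oia \<Rightarrow> bool" where
  "wf_oia M \<longleftrightarrow> finite (Q M) \<and> q0 M \<in> Q M \<and> Acc M \<subseteq> Q M \<and> Rej M \<subseteq> Q M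
     \<and> Acc M \<inter> Rej M = {} \<and> lam M > 0 \<and> amp M > 0
     \<and> (\<forall>q\<in>Q M. \<forall>s b. fst (delta M q s b) \<in> Q M)"

text \<open>The detector is at the grid point (dj/2, dk/2).
  src m is the state of the source of cell m (None = off).
  runlen m = length of the current maximal run of consecutive toggles on source m
  (0 if source m was not toggled in the last step); ntcount m = number of completed
  non-transient (odd-length) toggle runs on source m; moves = number of head moves
  plus detector moves made so far.\<close>
record conf =
  st :: nat
  hpos :: nat
  dj :: nat
  dk :: nat
  src :: "nat \<Rightarrow> phase option"
  runlen :: "nat \<Rightarrow> nat"
  ntcount :: "nat \<Rightarrow> nat"
  moves :: nat

definition init_conf :: "'a oia \<Rightarrow> conf" where
  "init_conf M = \<lparr>st = q0 M, hpos = 0, dj = 0, dk = 0, src = (\<lambda>_. None),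
     runlen = (\<lambda>_. 0), ntcount = (\<lambda>_. 0), moves = 0\<rparr>"

definition sdist :: "conf \<Rightarrow> nat \<Rightarrow> real" where
  "sdist c m = sqrt ((real m - real (dj c) / 2)^2 + (real (dk c) / 2)^2)"

definition sees :: "conf \<Rightarrow> nat \<Rightarrow> bool" where
  "sees c m \<longleftrightarrow> \<bar>2 * int m - int (dj c)\<bar> \<le> int (dk c)"

definition lit :: "nat \<Rightarrow> conf \<Rightarrow> nat set" where
  "lit n c = {m. m \<le> n + 1 \<and> src c m \<noteq> None \<and> sees c m}"

definition resultant :: "'a oia \<Rightarrow> nat \<Rightarrow> conf \<Rightarrow> complex" where
  "resultant M n c = (\<Sum>m\<in>{m\<in>lit n c. sdist c m \<noteq> 0}.
      complex_of_real (amp M / sdist c m)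
      * cis (phase_val (the (src c m)) + 2 * pi * sdist c m / lam M))"

text \<open>Detector output (True = 1). A switched-on source at distance 0 has
  unbounded amplitude at the detector and is counted as detected.\<close>
definition detect :: "'a oia \<Rightarrow> nat \<Rightarrow> conf \<Rightarrow> bool" where
  "detect M n c \<longleftrightarrow> (\<exists>m\<in>lit n c. sdist c m = 0) \<or> resultant M n c \<noteq> 0"

definition tape :: "'a list \<Rightarrow> nat \<Rightarrow> 'a tsym" where
  "tape w h = (if h = 0 then LEnd else if h \<le> length w then Sym (w ! (h - 1)) else REnd)"

definition move_head :: "nat \<Rightarrow> hmove \<Rightarrow> nat \<Rightarrow> nat option" where
  "move_head n hm h = (case hm of
      HLeft \<Rightarrow> if 0 < h then Some (h - 1) else None
    | HRight \<Rightarrow> if h < n + 1 then Some (h + 1) else None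
    | HStay \<Rightarrow> Some h)"

text \<open>Detector moves by half a unit; grid coordinates range over 0..2(n+1) halves.\<close>
definition move_det :: "nat \<Rightarrow> dmove \<Rightarrow> nat \<times> nat \<Rightarrow> (nat \<times> nat) option" where
  "move_det n dm p = (case p of (j, k) \<Rightarrow> (case dm of
      DLeft \<Rightarrow> if 0 < j then Some (j - 1, k) else None
    | DRight \<Rightarrow> if j < 2 * (n + 1) then Some (j + 1, k) else None
    | DUp \<Rightarrow> if k < 2 * (n + 1) then Some (j, k + 1) else None
    | DDown \<Rightarrow> if 0 < k then Some (j, k - 1) else None
    | DStay \<Rightarrow> Some (j, k)))"

text \<open>One step; None means the machine crashes (head or detector leaves its range,
  or a (kmax+1)-th non-transient toggle sequence on some source is completed).\<close>
definition step :: "'a oia \<Rightarrow> 'a list \<Rightarrow> conf \<Rightarrow> conf option" where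
  "step M w c = (case delta M (st c) (tape w (hpos c)) (detect M (length w) c) of
     (q', hm, dm, a) \<Rightarrow>
       (let n = length w; h = hpos c;
            tog = (\<lambda>m. m = h \<and> a \<noteq> NoAct);
            src' = (case a of NoAct \<Rightarrow> src c
                     | Toggle p \<Rightarrow> (src c)(h := (if src c h = None then Some p else None)));
            nt' = (\<lambda>m. if \<not> tog m \<and> odd (runlen c m) then ntcount c m + 1 else ntcount c m);
            rl' = (\<lambda>m. if tog m then runlen c m + 1 else 0);
            mv = (if hm = HStay then 0 else 1) + (if dm = DStay then 0 else (1::nat))
        in (case (move_head n hm h, move_det n dm (dj c, dk c)) of
              (Some h', Some (j', k')) \<Rightarrow>
                 if (\<exists>m. nt' m > kmax M) then None
                 else Some \<lparr>st = q', hpos = h', dj = j', dk = k', src = src',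
                            runlen = rl', ntcount = nt', moves = moves c + mv\<rparr>
            | _ \<Rightarrow> None)))"

definition halted :: "'a oia \<Rightarrow> conf \<Rightarrow> bool" where
  "halted M c \<longleftrightarrow> st c \<in> Acc M \<union> Rej M"

primrec exec :: "'a oia \<Rightarrow> 'a list \<Rightarrow> nat \<Rightarrow> conf option" where
  "exec M w 0 = Some (init_conf M)"
| "exec M w (Suc t) = (case exec M w t of None \<Rightarrow> None
     | Some c \<Rightarrow> if halted M c then Some c else step M w c)"

text \<open>A toggle run still pending at halting time is also counted.\<close>
definition final_ok :: "'a oia \<Rightarrow> conf \<Rightarrow> bool" where
  "final_ok M c \<longleftrightarrow> (\<forall>m. odd (runlen c m) \<longrightarrow> ntcount c m + 1 \<le> kmax M)"

definition accepts :: "'a oia \<Rightarrow> 'a list \<Rightarrow> bool" where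
  "accepts M w \<longleftrightarrow> (\<exists>t c. exec M w t = Some c \<and> st c \<in> Acc M
      \<and> \<not> detect M (length w) c \<and> final_ok M c)"

definition halts :: "'a oia \<Rightarrow> 'a list \<Rightarrow> bool" where
  "halts M w \<longleftrightarrow> (\<exists>t. exec M w t = None \<or> (\<exists>c. exec M w t = Some c \<and> halted M c))"

definition recognizes :: "'a oia \<Rightarrow> 'a list set \<Rightarrow> bool" where
  "recognizes M L \<longleftrightarrow> (\<forall>w. (w \<in> L \<longrightarrow> accepts M w) \<and> (w \<notin> L \<longrightarrow> halts M w \<and> \<not> accepts M w))"

definition time_bounded :: "'a oia \<Rightarrow> (nat \<Rightarrow> real) \<Rightarrow> bool" where
  "time_bounded M T \<longleftrightarrow> (\<forall>w. halts M w \<and>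
      (\<forall>t c. exec M w t = Some c \<longrightarrow> real (moves c) \<le> T (length w)))"

definition Lsq :: "ab list set" where
  "Lsq = {replicate n A @ replicate (n^2) B | n. True}"

end

theory Submission
  imports Defs
begin


definition dl :: "nat \<Rightarrow> ab tsym \<Rightarrow> bool \<Rightarrow> nat \<times> hmove \<times> dmove \<times> action" where
"dl q s d =
 (if q = 0 then (1, HRight, DStay, Toggle Ph0)
  else if q = 1 then (case s of REnd \<Rightarrow> (9, HStay, DRight, NoAct) | Sym A \<Rightarrow> (2, HRight, DUp, NoAct) | _ \<Rightarrow> (10, HStay, DStay, NoAct))
  else if q = 2 then (case s of Sym A \<Rightarrow> (2, HRight, DUp, NoAct) | Sym B \<Rightarrow> (3, HRight, DRight, NoAct) | _ \<Rightarrow> (10, HStay, DStay, NoAct))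
  else if q = 3 then (case s of Sym B \<Rightarrow> (3, HRight, DRight, NoAct) | REnd \<Rightarrow> (4, HLeft, DStay, NoAct) | _ \<Rightarrow> (10, HStay, DStay, NoAct))
  else if q = 4 then (case s of Sym B \<Rightarrow> (4, HLeft, DStay, NoAct) | Sym A \<Rightarrow> (5, HLeft, DLeft, NoAct) | _ \<Rightarrow> (10, HStay, DStay, NoAct))
  else if q = 5 then (case s of Sym A \<Rightarrow> (5, HLeft, DLeft, NoAct) | LEnd \<Rightarrow> (6, HStay, DDown, NoAct) | _ \<Rightarrow> (10, HStay, DStay, NoAct))
  else if q = 6 then (if d then (8, HRight, DStay, Toggle Ph0) else (7, HRight, DStay, NoAct))
  else if q = 7 then (case s of Sym A \<Rightarrow> (7, HRight, DStay, NoAct) | Sym B \<Rightarrow> (5, HLeft, DStay, NoAct) | _ \<Rightarrow> (10, HStay, DStay, NoAct))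
  else if q = 8 then (9, HStay, DRight, Toggle Ph0)
  else (10, HStay, DStay, NoAct))"

definition Mach :: "ab oia" where
"Mach = \<lparr>Q = {..10}, q0 = 0, Acc = {9}, Rej = {10}, delta = dl, lam = 1, amp = 1, kmax = 2\<rparr>"

lemma Mach_simps[simp]: "Q Mach = {..10}" "q0 Mach = 0" "Acc Mach = {9}" "Rej Mach = {10}"
  "delta Mach = dl" "lam Mach = 1" "amp Mach = 1" "kmax Mach = 2"
  by (simp_all add: Mach_def)

lemma wf_Mach: "wf_oia Mach"
  unfolding wf_oia_def by (auto simp: dl_def split: tsym.split ab.split)

lemma step_Some:
  assumes "dl (st c) (tape w (hpos c)) (detect Mach (length w) c) = (q', hm, dm, a)"
  and "move_head (length w) hm (hpos c) = Some h'"
  and "move_det (length w) dm (dj c, dk c) = Some (j', k')"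
  and "\<forall>m. (if \<not> (m = hpos c \<and> a \<noteq> NoAct) \<and> odd (runlen c m) then ntcount c m + 1 else ntcount c m) \<le> 2"
  shows "step Mach w c = Some \<lparr>st = q', hpos = h', dj = j', dk = k',
     src = (case a of NoAct \<Rightarrow> src c | Toggle p \<Rightarrow> (src c)(hpos c := (if src c (hpos c) = None then Some p else None))),
     runlen = (\<lambda>m. if m = hpos c \<and> a \<noteq> NoAct then runlen c m + 1 else 0),
     ntcount = (\<lambda>m. if \<not> (m = hpos c \<and> a \<noteq> NoAct) \<and> odd (runlen c m) then ntcount c m + 1 else ntcount c m),
     moves = moves c + ((if hm = HStay then 0 else 1) + (if dm = DStay then 0 else (1::nat)))\<rparr>"
proof -
  have "\<not> (\<exists>m. (if \<not> (m = hpos c \<and> a \<noteq> NoAct) \<and> odd (runlen c m) then ntcount c m + 1 else ntcount c m) > 2)"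
    using assms(4) by (simp add: not_less)
  then show ?thesis
    apply (simp only: step_def Mach_simps(5) assms(1) Let_def prod.case assms(2) assms(3) option.case)
    apply simp
    done
qed

lemma step_None:
  assumes "dl (st c) (tape w (hpos c)) (detect Mach (length w) c) = (q', hm, dm, a)"
  and "move_det (length w) dm (dj c, dk c) = None"
  shows "step Mach w c = None"
  apply (simp only: step_def Mach_simps(5) assms(1) Let_def prod.case assms(2))
  apply (simp split: option.split)
  done

definition mark :: "nat \<Rightarrow> nat \<Rightarrow> phase option" where
  "mark p = (\<lambda>_. None)(p := Some Ph0)"

lemma detect_none: "src c = (\<lambda>_. None) \<Longrightarrow> \<not> detect Mach n c"
  by (simp add: detect_def lit_def resultant_def)

lemma detect_mark: assumes "src c = mark p" "p \<le> n + 1"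
  shows "detect Mach n c \<longleftrightarrow> sees c p"
proof -
  have L: "lit n c = (if sees c p then {p} else {})"
    using assms by (auto simp: lit_def mark_def)
  show ?thesis
  proof (cases "sees c p")
    case False then show ?thesis using L by (simp add: detect_def resultant_def)
  next
    case True
    show ?thesis
    proof (cases "sdist c p = 0")
      case True then show ?thesis using L \<open>sees c p\<close> by (simp add: detect_def)
    next
      case False
      have "resultant Mach n c = complex_of_real (1 / sdist c p) * cis (phase_val (the (src c p)) + 2 * pi * sdist c p / 1)"
      proof -
        have "{m \<in> lit n c. sdist c m \<noteq> 0} = {p}" using L \<open>sees c p\<close> False by auto
        then show ?thesis by (simp add: resultant_def)
      qed
      moreover have "complex_of_real (1 / sdist c p) \<noteq> 0" using False by simp
      ultimately have "resultant Mach n c \<noteq> 0" by simp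
      then show ?thesis using True by (simp add: detect_def)
    qed
  qed
qed

lemma sees0: "sees c 0 \<longleftrightarrow> dj c \<le> dk c" by (auto simp: sees_def)
lemma sees1: "sees c 1 \<longleftrightarrow> \<bar>2 - int (dj c)\<bar> \<le> int (dk c)" by (auto simp: sees_def)


definition e0 :: "nat \<Rightarrow> nat" where "e0 = (\<lambda>m. if m = 0 then 1 else 0)"

definition cm :: "conf \<Rightarrow> bool" where
  "cm c \<longleftrightarrow> src c = mark 0 \<and> runlen c = (\<lambda>_. 0) \<and> ntcount c = e0"

lemma step_cm:
  assumes "cm c" "dl (st c) (tape w (hpos c)) (detect Mach (length w) c) = (q', hm, dm, NoAct)"
    "move_head (length w) hm (hpos c) = Some h'" "move_det (length w) dm (dj c, dk c) = Some (j',k')"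
  shows "step Mach w c = Some \<lparr>st = q', hpos = h', dj = j', dk = k', src = mark 0, runlen = (\<lambda>_. 0),
     ntcount = e0, moves = moves c + ((if hm = HStay then 0 else 1) + (if dm = DStay then 0 else (1::nat)))\<rparr>"
proof -
  have "step Mach w c = Some \<lparr>st = q', hpos = h', dj = j', dk = k',
     src = (case NoAct of NoAct \<Rightarrow> src c | Toggle p \<Rightarrow> (src c)(hpos c := (if src c (hpos c) = None then Some p else None))),
     runlen = (\<lambda>m. if m = hpos c \<and> NoAct \<noteq> NoAct then runlen c m + 1 else 0),
     ntcount = (\<lambda>m. if \<not> (m = hpos c \<and> NoAct \<noteq> NoAct) \<and> odd (runlen c m) then ntcount c m + 1 else ntcount c m),
     moves = moves c + ((if hm = HStay then 0 else 1) + (if dm = DStay then 0 else (1::nat)))\<rparr>"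
    by (rule step_Some[OF assms(2-4)]) (use assms(1) in \<open>simp add: cm_def e0_def\<close>)
  then show ?thesis using assms(1) by (simp add: cm_def)
qed

definition Lw :: "nat \<Rightarrow> nat \<Rightarrow> ab list" where "Lw n m = replicate n A @ replicate m B"

lemma tape_Lw: "tape (Lw n m) h = (if h = 0 then LEnd else if h \<le> n then Sym A else if h \<le> n + m then Sym B else REnd)"
  by (auto simp: tape_def Lw_def nth_append)

lemma len_Lw[simp]: "length (Lw n m) = n + m" by (simp add: Lw_def)

lemma Lw_inj: "Lw n m = Lw n' m' \<Longrightarrow> n = n' \<and> m = m'"
proof -
  assume h: "Lw n m = Lw n' m'"
  have "length (filter (\<lambda>x. x = A) (Lw n m)) = length (filter (\<lambda>x. x = A) (Lw n' m'))" using h by simp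
  then have "n = n'" by (simp add: Lw_def filter_replicate)
  moreover have "length (Lw n m) = length (Lw n' m')" using h by simp
  ultimately show ?thesis by simp
qed

lemma Lsq_iff: "w \<in> Lsq \<longleftrightarrow> (\<exists>n. w = Lw n (n*n))"
  by (auto simp: Lsq_def Lw_def power2_eq_square)

lemma notL_B0: "w \<noteq> [] \<Longrightarrow> w ! 0 = B \<Longrightarrow> w \<notin> Lsq"
  unfolding Lsq_iff Lw_def by (auto simp: nth_append split: if_splits)

lemma notL_allA: "1 \<le> length w \<Longrightarrow> \<forall>p<length w. w ! p = A \<Longrightarrow> w \<notin> Lsq"
proof
  assume "1 \<le> length w" "\<forall>p<length w. w ! p = A" "w \<in> Lsq"
  then obtain n where w: "w = Lw n (n*n)" by (auto simp: Lsq_iff)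
  show False
  proof (cases "n = 0")
    case True then show False using w \<open>1 \<le> length w\<close> by simp
  next
    case False
    have "w ! n = B" using w False by (simp add: Lw_def nth_append)
    moreover have "n < length w" using w False by simp
    ultimately show False using \<open>\<forall>p<length w. w ! p = A\<close> by auto
  qed
qed

lemma notL_BA: "p < q \<Longrightarrow> q < length w \<Longrightarrow> w ! p = B \<Longrightarrow> w ! q = A \<Longrightarrow> w \<notin> Lsq"
proof
  assume a: "p < q" "q < length w" "w ! p = B" "w ! q = A" "w \<in> Lsq"
  then obtain n where w: "w = Lw n (n*n)" by (auto simp: Lsq_iff)
  have "n \<le> p" using a w by (auto simp: Lw_def nth_append split: if_splits)
  then show False using a w by (auto simp: Lw_def nth_append split: if_splits)
qed


definition I0 :: "conf \<Rightarrow> bool" where "I0 c \<longleftrightarrow> c = init_conf Mach"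
definition I1 :: "conf \<Rightarrow> bool" where
  "I1 c \<longleftrightarrow> st c = 1 \<and> hpos c = 1 \<and> dj c = 0 \<and> dk c = 0 \<and> src c = mark 0 \<and> runlen c = e0
     \<and> ntcount c = (\<lambda>_. 0) \<and> moves c = 1"
definition I2 :: "ab list \<Rightarrow> conf \<Rightarrow> nat \<Rightarrow> bool" where
  "I2 w c i \<longleftrightarrow> st c = 2 \<and> 1 \<le> i \<and> i \<le> length w \<and> (\<forall>p<i. w ! p = A) \<and> hpos c = i + 1
     \<and> dj c = 0 \<and> dk c = i \<and> cm c \<and> moves c = 1 + 2 * i"
definition I3 :: "ab list \<Rightarrow> conf \<Rightarrow> nat \<Rightarrow> nat \<Rightarrow> bool" where
  "I3 w c n j \<longleftrightarrow> st c = 3 \<and> 1 \<le> n \<and> 1 \<le> j \<and> n + j \<le> length w \<and> (\<forall>p<n. w ! p = A)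
     \<and> (\<forall>p. n \<le> p \<longrightarrow> p < n + j \<longrightarrow> w ! p = B) \<and> hpos c = n + j + 1
     \<and> dj c = j \<and> dk c = n \<and> cm c \<and> moves c = 1 + 2 * n + 2 * j"
definition I4 :: "ab list \<Rightarrow> conf \<Rightarrow> nat \<Rightarrow> nat \<Rightarrow> nat \<Rightarrow> bool" where
  "I4 w c n m h \<longleftrightarrow> st c = 4 \<and> 1 \<le> n \<and> 1 \<le> m \<and> w = Lw n m \<and> n \<le> h \<and> h \<le> n + m \<and> hpos c = h
     \<and> dj c = m \<and> dk c = n \<and> cm c \<and> moves c + h = 2 + 3 * (n + m)"
definition I5 :: "ab list \<Rightarrow> conf \<Rightarrow> nat \<Rightarrow> nat \<Rightarrow> nat \<Rightarrow> nat \<Rightarrow> bool" where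
  "I5 w c n m k h \<longleftrightarrow> st c = 5 \<and> 1 \<le> n \<and> 1 \<le> m \<and> w = Lw n m \<and> 1 \<le> k \<and> k \<le> n + 1
     \<and> (k \<le> n \<or> n * n < m) \<and> h \<le> n \<and> hpos c = h \<and> dj c + k * n = m + h \<and> dk c + k = n + 1 \<and> cm c
     \<and> moves c + 2 * h + 4 * (n + 1) \<le> 2 + 3 * (n + m) + 2 * n + k * (4 * n + 4)"
definition I6 :: "ab list \<Rightarrow> conf \<Rightarrow> nat \<Rightarrow> nat \<Rightarrow> nat \<Rightarrow> bool" where
  "I6 w c n m k \<longleftrightarrow> st c = 6 \<and> 1 \<le> n \<and> 1 \<le> m \<and> w = Lw n m \<and> 1 \<le> k \<and> k \<le> n
     \<and> hpos c = 0 \<and> dj c + k * n = m \<and> dk c + k = n \<and> cm c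
     \<and> moves c + 4 * (n + 1) \<le> 3 + 3 * (n + m) + 2 * n + k * (4 * n + 4)"
definition I7 :: "ab list \<Rightarrow> conf \<Rightarrow> nat \<Rightarrow> nat \<Rightarrow> nat \<Rightarrow> nat \<Rightarrow> bool" where
  "I7 w c n m k h \<longleftrightarrow> st c = 7 \<and> 1 \<le> n \<and> 1 \<le> m \<and> w = Lw n m \<and> 1 \<le> k \<and> k \<le> n
     \<and> 1 \<le> h \<and> h \<le> n + 1 \<and> hpos c = h \<and> dj c + k * n = m \<and> dk c + k = n \<and> dk c < dj c \<and> cm c
     \<and> moves c + 4 * (n + 1) \<le> 3 + 3 * (n + m) + 2 * n + k * (4 * n + 4) + h"
definition I8 :: "ab list \<Rightarrow> conf \<Rightarrow> nat \<Rightarrow> nat \<Rightarrow> nat \<Rightarrow> bool" where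
  "I8 w c n m k \<longleftrightarrow> st c = 8 \<and> 1 \<le> n \<and> 1 \<le> m \<and> w = Lw n m \<and> 1 \<le> k \<and> k \<le> n
     \<and> hpos c = 1 \<and> dj c + k * n = m \<and> dk c + k = n \<and> dj c \<le> dk c \<and> src c = (\<lambda>_. None)
     \<and> runlen c = e0 \<and> ntcount c = e0
     \<and> moves c + 4 * (n + 1) \<le> 4 + 3 * (n + m) + 2 * n + k * (4 * n + 4)"
definition I9 :: "ab list \<Rightarrow> conf \<Rightarrow> bool" where
  "I9 w c \<longleftrightarrow> st c = 9 \<and> ((w = [] \<and> dj c = 1 \<and> dk c = 0 \<and> src c = mark 0 \<and> runlen c = (\<lambda>_. 0)
       \<and> ntcount c = e0 \<and> moves c = 2)
     \<or> (\<exists>n m k b. 1 \<le> n \<and> 1 \<le> m \<and> w = Lw n m \<and> 1 \<le> k \<and> k \<le> n \<and> dj c = b + 1 \<and> b + k * n = m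
         \<and> dk c + k = n \<and> b \<le> dk c \<and> src c = mark 1 \<and> runlen c = (\<lambda>x. if x = 1 then 1 else 0)
         \<and> ntcount c = (\<lambda>x. if x = 0 then 2 else 0)
         \<and> moves c + 4 * (n + 1) \<le> 5 + 3 * (n + m) + 2 * n + k * (4 * n + 4)))"
definition I10 :: "ab list \<Rightarrow> conf \<Rightarrow> bool" where
  "I10 w c \<longleftrightarrow> st c = 10 \<and> w \<notin> Lsq \<and> moves c \<le> 1 + 2 * length w"

definition Inv :: "ab list \<Rightarrow> conf \<Rightarrow> bool" where
  "Inv w c \<longleftrightarrow> I0 c \<or> I1 c \<or> (\<exists>i. I2 w c i) \<or> (\<exists>n j. I3 w c n j) \<or> (\<exists>n m h. I4 w c n m h)
    \<or> (\<exists>n m k h. I5 w c n m k h) \<or> (\<exists>n m k. I6 w c n m k) \<or> (\<exists>n m k h. I7 w c n m k h)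
    \<or> (\<exists>n m k. I8 w c n m k) \<or> I9 w c \<or> I10 w c"

definition stepOK :: "ab list \<Rightarrow> conf \<Rightarrow> bool" where
  "stepOK w c \<longleftrightarrow> (case step Mach w c of None \<Rightarrow> w \<notin> Lsq
      | Some c' \<Rightarrow> Inv w c' \<and> (halted Mach c' \<or> moves c < moves c'))"

lemma ok_I0: "I0 c \<Longrightarrow> stepOK w c"
proof -
  assume "I0 c"
  have "step Mach w c = Some \<lparr>st = 1, hpos = 1, dj = 0, dk = 0,
     src = (case Toggle Ph0 of NoAct \<Rightarrow> src c | Toggle p \<Rightarrow> (src c)(hpos c := (if src c (hpos c) = None then Some p else None))),
     runlen = (\<lambda>m. if m = hpos c \<and> Toggle Ph0 \<noteq> NoAct then runlen c m + 1 else 0),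
     ntcount = (\<lambda>m. if \<not> (m = hpos c \<and> Toggle Ph0 \<noteq> NoAct) \<and> odd (runlen c m) then ntcount c m + 1 else ntcount c m),
     moves = moves c + ((if HRight = HStay then 0 else 1) + (if DStay = DStay then 0 else (1::nat)))\<rparr>"
    by (rule step_Some) (use \<open>I0 c\<close> in \<open>auto simp: I0_def init_conf_def dl_def tape_def move_head_def move_det_def\<close>)
  moreover have "I1 \<lparr>st = 1, hpos = 1, dj = 0, dk = 0,
     src = (case Toggle Ph0 of NoAct \<Rightarrow> src c | Toggle p \<Rightarrow> (src c)(hpos c := (if src c (hpos c) = None then Some p else None))),
     runlen = (\<lambda>m. if m = hpos c \<and> Toggle Ph0 \<noteq> NoAct then runlen c m + 1 else 0),
     ntcount = (\<lambda>m. if \<not> (m = hpos c \<and> Toggle Ph0 \<noteq> NoAct) \<and> odd (runlen c m) then ntcount c m + 1 else ntcount c m),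
     moves = moves c + ((if HRight = HStay then 0 else 1) + (if DStay = DStay then 0 else (1::nat)))\<rparr>"
    using \<open>I0 c\<close> by (auto simp: I1_def I0_def init_conf_def mark_def e0_def)
  ultimately show ?thesis using \<open>I0 c\<close> by (simp add: stepOK_def Inv_def I0_def init_conf_def)
qed


lemma step_SomeE:
  assumes "dl (st c) (tape w (hpos c)) (detect Mach (length w) c) = (q', hm, dm, a)"
  and "move_head (length w) hm (hpos c) = Some h'"
  and "move_det (length w) dm (dj c, dk c) = Some (j', k')"
  and "\<forall>m. (if \<not> (m = hpos c \<and> a \<noteq> NoAct) \<and> odd (runlen c m) then ntcount c m + 1 else ntcount c m) \<le> 2"
  and "P \<lparr>st = q', hpos = h', dj = j', dk = k',
     src = (case a of NoAct \<Rightarrow> src c | Toggle p \<Rightarrow> (src c)(hpos c := (if src c (hpos c) = None then Some p else None))),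
     runlen = (\<lambda>m. if m = hpos c \<and> a \<noteq> NoAct then runlen c m + 1 else 0),
     ntcount = (\<lambda>m. if \<not> (m = hpos c \<and> a \<noteq> NoAct) \<and> odd (runlen c m) then ntcount c m + 1 else ntcount c m),
     moves = moves c + ((if hm = HStay then 0 else 1) + (if dm = DStay then 0 else (1::nat)))\<rparr>"
  shows "case step Mach w c of None \<Rightarrow> QQ | Some c' \<Rightarrow> P c'"
  using step_Some[OF assms(1-4)] assms(5) by simp

lemma step_cmE:
  assumes "cm c" "dl (st c) (tape w (hpos c)) (detect Mach (length w) c) = (q', hm, dm, NoAct)"
    "move_head (length w) hm (hpos c) = Some h'" "move_det (length w) dm (dj c, dk c) = Some (j',k')"
  and "P \<lparr>st = q', hpos = h', dj = j', dk = k', src = mark 0, runlen = (\<lambda>_. 0),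
     ntcount = e0, moves = moves c + ((if hm = HStay then 0 else 1) + (if dm = DStay then 0 else (1::nat)))\<rparr>"
  shows "case step Mach w c of None \<Rightarrow> QQ | Some c' \<Rightarrow> P c'"
  using step_cm[OF assms(1-4)] assms(5) by simp

lemma step_NoneE:
  assumes "dl (st c) (tape w (hpos c)) (detect Mach (length w) c) = (q', hm, dm, a)"
  and "move_det (length w) dm (dj c, dk c) = None" and QQ
  shows "case step Mach w c of None \<Rightarrow> QQ | Some c' \<Rightarrow> P c'"
  using step_None[OF assms(1-2)] assms(3) by simp

lemma InvI: "I1 c \<Longrightarrow> Inv w c" "I2 w c i \<Longrightarrow> Inv w c" "I3 w c n j \<Longrightarrow> Inv w c" "I4 w c n m h \<Longrightarrow> Inv w c"
  "I5 w c n m k h \<Longrightarrow> Inv w c" "I6 w c n m k \<Longrightarrow> Inv w c" "I7 w c n m k h \<Longrightarrow> Inv w c"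
  "I8 w c n m k \<Longrightarrow> Inv w c" "I9 w c \<Longrightarrow> Inv w c" "I10 w c \<Longrightarrow> Inv w c"
  unfolding Inv_def by blast+

lemma halted_iff: "halted Mach c \<longleftrightarrow> st c = 9 \<or> st c = 10" by (auto simp: halted_def)

lemma ok_I1: assumes "I1 c" shows "stepOK w c"
proof (cases "w = []")
  case True
  show ?thesis unfolding stepOK_def
    apply (rule step_SomeE[where q'=9 and hm=HStay and dm=DRight and a=NoAct and h'=1 and j'=1 and k'=0])
    using assms True apply (auto simp: I1_def dl_def tape_def move_head_def move_det_def e0_def)[4]
    using assms True by (auto simp: I1_def I9_def e0_def halted_iff fun_eq_iff intro!: InvI(9))
next
  case False
  then have t: "tape w (hpos c) = Sym (w ! 0)" using assms by (simp add: I1_def tape_def Suc_le_eq)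
  show ?thesis
  proof (cases "w ! 0")
    case A
    show ?thesis unfolding stepOK_def
      apply (rule step_SomeE[where q'=2 and hm=HRight and dm=DUp and a=NoAct and h'=2 and j'=0 and k'=1])
      using assms t A False apply (auto simp: I1_def dl_def move_head_def move_det_def e0_def)[4]
      using assms A False by (auto simp: I1_def I2_def cm_def e0_def fun_eq_iff Suc_le_eq intro!: InvI(2)[where i=1])
  next
    case B
    have "w \<notin> Lsq" using notL_B0 False B by blast
    show ?thesis unfolding stepOK_def
      apply (rule step_SomeE[where q'=10 and hm=HStay and dm=DStay and a=NoAct and h'=1 and j'=0 and k'=0])
      using assms t B False apply (auto simp: I1_def dl_def move_head_def move_det_def e0_def)[4]
      using assms \<open>w \<notin> Lsq\<close> by (auto simp: I1_def I10_def halted_iff intro!: InvI(10))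
  qed
qed




lemma ok_I2: assumes "I2 w c i" shows "stepOK w c"
proof -
  have f: "st c = 2" "hpos c = i+1" "dj c = 0" "dk c = i" "cm c" "moves c = 1 + 2 * i"
    "1 \<le> i" "i \<le> length w" using assms unfolding I2_def by auto
  have fA: "\<forall>p<i. w ! p = A" using assms unfolding I2_def by auto
  show ?thesis
  proof (cases "i = length w")
  case True
  have "w \<notin> Lsq" using f fA True by (intro notL_allA) auto
  show ?thesis unfolding stepOK_def
    apply (rule step_cmE[where q'=10 and hm=HStay and dm=DStay and h'="i+1" and j'=0 and k'=i])
    using f True apply (auto simp: dl_def tape_def move_head_def move_det_def)[4]
    apply (rule conjI, rule InvI(10))
    using f True \<open>w \<notin> Lsq\<close> by (auto simp: I10_def halted_iff)
next
  case False
  then have il: "i < length w" using f by simp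
  then have t: "tape w (hpos c) = Sym (w ! i)" using f by (simp add: tape_def)
  show ?thesis
  proof (cases "w ! i")
    case A
    show ?thesis unfolding stepOK_def
      apply (rule step_cmE[where q'=2 and hm=HRight and dm=DUp and h'="i+2" and j'=0 and k'="i+1"])
      using f t A il apply (auto simp: dl_def move_head_def move_det_def)[4]
      apply (rule conjI, rule InvI(2)[where i="i+1"])
      using f fA A il by (auto simp: I2_def less_Suc_eq cm_def)
  next
    case B
    show ?thesis unfolding stepOK_def
      apply (rule step_cmE[where q'=3 and hm=HRight and dm=DRight and h'="i+2" and j'=1 and k'=i])
      using f t B il apply (auto simp: dl_def move_head_def move_det_def)[4]
      apply (rule conjI, rule InvI(3)[where n=i and j=1])
      using f fA B il by (auto simp: I3_def cm_def le_less_Suc_eq)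
  qed
qed
qed


lemma ok_I3: assumes "I3 w c n j" shows "stepOK w c"
proof -
  have f: "st c = 3" "hpos c = n+j+1" "dj c = j" "dk c = n" "cm c" "moves c = 1 + 2 * n + 2 * j"
    "1 \<le> n" "1 \<le> j" "n + j \<le> length w" using assms unfolding I3_def by auto
  have fA: "\<forall>p<n. w ! p = A" and fB: "\<forall>p. n \<le> p \<longrightarrow> p < n + j \<longrightarrow> w ! p = B"
    using assms unfolding I3_def by auto
  show ?thesis
  proof (cases "n + j = length w")
  case True
  have w: "w = Lw n j"
  proof (rule nth_equalityI)
    show "length w = length (Lw n j)" using True by simp
    show "w ! p = Lw n j ! p" if "p < length w" for p
    proof (cases "p < n")
      case True then show ?thesis using fA by (simp add: Lw_def nth_append)
    next
      case False then show ?thesis using fB that \<open>n + j = length w\<close> by (simp add: Lw_def nth_append)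
    qed
  qed
  show ?thesis unfolding stepOK_def
    apply (rule step_cmE[where q'=4 and hm=HLeft and dm=DStay and h'="n+j" and j'=j and k'=n])
    using f True apply (auto simp: dl_def tape_def move_head_def move_det_def)[4]
    apply (rule conjI, rule InvI(4)[where n=n and m=j and h="n+j"])
    using f w by (auto simp: I4_def cm_def)
next
  case False
  then have il: "n + j < length w" using f by simp
  then have t: "tape w (hpos c) = Sym (w ! (n + j))" using f by (simp add: tape_def)
  show ?thesis
  proof (cases "w ! (n + j)")
    case A
    have "w \<notin> Lsq" 
      by (rule notL_BA[where p=n and q="n+j"]) (use fB f il A in \<open>auto\<close>)
    show ?thesis unfolding stepOK_def
      apply (rule step_cmE[where q'=10 and hm=HStay and dm=DStay and h'="n+j+1" and j'=j and k'=n])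
      using f t A il apply (auto simp: dl_def move_head_def move_det_def)[4]
      apply (rule conjI, rule InvI(10))
      using f \<open>w \<notin> Lsq\<close> il by (auto simp: I10_def halted_iff)
  next
    case B
    show ?thesis unfolding stepOK_def
      apply (rule step_cmE[where q'=3 and hm=HRight and dm=DRight and h'="n+j+2" and j'="j+1" and k'=n])
      using f t B il apply (auto simp: dl_def move_head_def move_det_def)[4]
      apply (rule conjI, rule InvI(3)[where n=n and j="j+1"])
      using f B il fA fB by (auto simp: I3_def less_Suc_eq cm_def)
  qed
qed
qed


lemma ok_I4: assumes "I4 w c n m h" shows "stepOK w c"
proof -
  have f: "st c = 4" "hpos c = h" "dj c = m" "dk c = n" "cm c" "moves c + h = 2 + 3 * (n + m)"
    "1 \<le> n" "1 \<le> m" "w = Lw n m" "n \<le> h" "h \<le> n + m" using assms unfolding I4_def by auto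
  show ?thesis
  proof (cases "h = n")
  case False
  then have t: "tape w (hpos c) = Sym B" using f by (auto simp: tape_Lw)
  show ?thesis unfolding stepOK_def
    apply (rule step_cmE[where q'=4 and hm=HLeft and dm=DStay and h'="h-1" and j'=m and k'=n])
    using f t False apply (auto simp: dl_def move_head_def move_det_def)[4]
    apply (rule conjI, rule InvI(4)[where n=n and m=m and h="h-1"])
    using f False by (auto simp: I4_def cm_def)
next
  case True
  then have t: "tape w (hpos c) = Sym A" using f by (auto simp: tape_Lw)
  show ?thesis unfolding stepOK_def
    apply (rule step_cmE[where q'=5 and hm=HLeft and dm=DLeft and h'="n-1" and j'="m-1" and k'=n])
    using f t True apply (auto simp: dl_def move_head_def move_det_def)[4]
    apply (rule conjI, rule InvI(5)[where n=n and m=m and k=1 and h="n-1"])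
    using f True by (auto simp: I5_def cm_def)
qed
qed


lemma ok_I5: assumes "I5 w c n m k h" shows "stepOK w c"
proof -
  have f: "st c = 5" "hpos c = h" "cm c" "1 \<le> n" "1 \<le> m" "w = Lw n m" "1 \<le> k" "k \<le> n + 1"
    "k \<le> n \<or> n * n < m" "h \<le> n" "dj c + k * n = m + h" "dk c + k = n + 1"
    "moves c + 2 * h + 4 * (n + 1) \<le> 2 + 3 * (n + m) + 2 * n + k * (4 * n + 4)"
    using assms unfolding I5_def by auto
  have mL: "m = n * n" if L: "w \<in> Lsq"
  proof -
    obtain n' where "w = Lw n' (n' * n')" using L unfolding Lsq_iff by blast
    then show ?thesis using f(6) Lw_inj by metis
  qed
  show ?thesis
  proof (cases "h = 0")
    case False
    then have t: "tape w (hpos c) = Sym A" using f by (auto simp: tape_Lw)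
    show ?thesis
    proof (cases "dj c = 0")
      case True
      have "w \<notin> Lsq"
      proof
        assume "w \<in> Lsq"
        then have "m = n * n" by (rule mL)
        then have "k \<le> n" using f(9) by auto
        then have "k * n \<le> n * n" by (rule mult_le_mono1)
        then show False using f(11) True False \<open>m = n * n\<close> by linarith
      qed
      show ?thesis unfolding stepOK_def
        apply (rule step_NoneE[where q'=5 and hm=HLeft and dm=DLeft and a=NoAct])
        using f t True \<open>w \<notin> Lsq\<close> by (auto simp: dl_def move_det_def)
    next
      case dj: False
      show ?thesis unfolding stepOK_def
        apply (rule step_cmE[where q'=5 and hm=HLeft and dm=DLeft and h'="h-1" and j'="dj c - 1" and k'="dk c"])
        using f t False dj apply (auto simp: dl_def move_head_def move_det_def)[4]
        apply (rule conjI, rule InvI(5)[where n=n and m=m and k=k and h="h-1"])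
        using f False dj by (auto simp: I5_def cm_def)
    qed
  next
    case True
    then have t: "tape w (hpos c) = LEnd" using f by (auto simp: tape_Lw)
    show ?thesis
    proof (cases "dk c = 0")
      case dk: True
      have "w \<notin> Lsq"
      proof
        assume "w \<in> Lsq"
        then have "m = n * n" by (rule mL)
        then show False using f(9,12) dk by auto
      qed
      show ?thesis unfolding stepOK_def
        apply (rule step_NoneE[where q'=6 and hm=HStay and dm=DDown and a=NoAct])
        using f t dk \<open>w \<notin> Lsq\<close> by (auto simp: dl_def move_det_def)
    next
      case dk: False
      show ?thesis unfolding stepOK_def
        apply (rule step_cmE[where q'=6 and hm=HStay and dm=DDown and h'=0 and j'="dj c" and k'="dk c - 1"])
        using f t True dk apply (auto simp: dl_def move_head_def move_det_def)[4]
        apply (rule conjI, rule InvI(6)[where n=n and m=m and k=k])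
        using f True dk by (auto simp: I6_def cm_def)
    qed
  qed
qed

lemma detect_cm: "cm c \<Longrightarrow> detect Mach n c \<longleftrightarrow> dj c \<le> dk c"
  using detect_mark[of c 0 n] sees0[of c] by (simp add: cm_def)

lemma ok_I6: assumes "I6 w c n m k" shows "stepOK w c"
proof -
  have f: "st c = 6" "hpos c = 0" "cm c" "1 \<le> n" "1 \<le> m" "w = Lw n m" "1 \<le> k" "k \<le> n"
    "dj c + k * n = m" "dk c + k = n"
    "moves c + 4 * (n + 1) \<le> 3 + 3 * (n + m) + 2 * n + k * (4 * n + 4)"
    using assms unfolding I6_def by auto
  have t: "tape w (hpos c) = LEnd" using f by (auto simp: tape_Lw)
  show ?thesis
  proof (cases "dj c \<le> dk c")
    case True
    then have d: "detect Mach (length w) c" using detect_cm f(3) by blast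
    show ?thesis unfolding stepOK_def
      apply (rule step_SomeE[where q'=8 and hm=HRight and dm=DStay and a="Toggle Ph0" and h'=1 and j'="dj c" and k'="dk c"])
      using f t d apply (auto simp: dl_def move_head_def move_det_def cm_def e0_def)[4]
      apply (rule conjI, rule InvI(8)[where n=n and m=m and k=k])
      using f True by (auto simp: I8_def cm_def e0_def mark_def fun_eq_iff halted_iff)
  next
    case False
    then have d: "\<not> detect Mach (length w) c" using detect_cm f(3) by blast
    show ?thesis unfolding stepOK_def
      apply (rule step_cmE[where q'=7 and hm=HRight and dm=DStay and h'=1 and j'="dj c" and k'="dk c"])
      using f t d apply (auto simp: dl_def move_head_def move_det_def)[4]
      apply (rule conjI, rule InvI(7)[where n=n and m=m and k=k and h=1])
      using f False by (auto simp: I7_def cm_def)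
  qed
qed

lemma ok_I7: assumes "I7 w c n m k h" shows "stepOK w c"
proof -
  have f: "st c = 7" "hpos c = h" "cm c" "1 \<le> n" "1 \<le> m" "w = Lw n m" "1 \<le> k" "k \<le> n"
    "1 \<le> h" "h \<le> n + 1" "dj c + k * n = m" "dk c + k = n" "dk c < dj c"
    "moves c + 4 * (n + 1) \<le> 3 + 3 * (n + m) + 2 * n + k * (4 * n + 4) + h"
    using assms unfolding I7_def by auto
  show ?thesis
  proof (cases "h \<le> n")
    case True
    then have t: "tape w (hpos c) = Sym A" using f by (auto simp: tape_Lw)
    show ?thesis unfolding stepOK_def
      apply (rule step_cmE[where q'=7 and hm=HRight and dm=DStay and h'="h+1" and j'="dj c" and k'="dk c"])
      using f t True apply (auto simp: dl_def move_head_def move_det_def)[4]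
      apply (rule conjI, rule InvI(7)[where n=n and m=m and k=k and h="h+1"])
      using f True by (auto simp: I7_def cm_def)
  next
    case False
    then have h: "h = n + 1" using f by simp
    then have t: "tape w (hpos c) = Sym B" using f by (auto simp: tape_Lw)
    have kk: "k + 1 \<le> n \<or> n * n < m"
    proof (cases "k = n")
      case True then show ?thesis using f(11,12,13) by auto
    qed (use f in auto)
    show ?thesis unfolding stepOK_def
      apply (rule step_cmE[where q'=5 and hm=HLeft and dm=DStay and h'=n and j'="dj c" and k'="dk c"])
      using f t h apply (auto simp: dl_def move_head_def move_det_def)[4]
      apply (rule conjI, rule InvI(5)[where n=n and m=m and k="k+1" and h=n])
      using f h kk by (auto simp: I5_def cm_def)
  qed
qed

lemma ok_I8: assumes "I8 w c n m k" shows "stepOK w c"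
proof -
  have f: "st c = 8" "hpos c = 1" "1 \<le> n" "1 \<le> m" "w = Lw n m" "1 \<le> k" "k \<le> n"
    "dj c + k * n = m" "dk c + k = n" "dj c \<le> dk c" "src c = (\<lambda>_. None)" "runlen c = e0" "ntcount c = e0"
    "moves c + 4 * (n + 1) \<le> 4 + 3 * (n + m) + 2 * n + k * (4 * n + 4)"
    using assms unfolding I8_def by auto
  show ?thesis unfolding stepOK_def
    apply (rule step_SomeE[where q'=9 and hm=HStay and dm=DRight and a="Toggle Ph0" and h'=1 and j'="dj c + 1" and k'="dk c"])
    using f apply (auto simp: dl_def move_head_def move_det_def e0_def)[4]
    apply (rule conjI, rule InvI(9))
    unfolding I9_def
    apply (rule conjI, simp)
    apply (rule disjI2, rule exI[of _ n], rule exI[of _ m], rule exI[of _ k], rule exI[of _ "dj c"])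
    using f by (auto simp: e0_def mark_def fun_eq_iff halted_iff)
qed




lemma ok_all: assumes "Inv w c" "\<not> halted Mach c" shows "stepOK w c"
  using assms(1) unfolding Inv_def
proof (elim disjE exE)
  assume "I9 w c" then show ?thesis using assms(2) by (simp add: I9_def halted_iff)
next
  assume "I10 w c" then show ?thesis using assms(2) by (simp add: I10_def halted_iff)
qed (auto intro: ok_I0 ok_I1 ok_I2 ok_I3 ok_I4 ok_I5 ok_I6 ok_I7 ok_I8)

lemma exec_inv: "case exec Mach w t of None \<Rightarrow> w \<notin> Lsq | Some c \<Rightarrow> Inv w c \<and> (halted Mach c \<or> t \<le> moves c)"
proof (induction t)
  case 0
  then show ?case by (simp add: Inv_def I0_def)
next
  case (Suc t)
  show ?case
  proof (cases "exec Mach w t")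
    case None
    then show ?thesis using Suc by simp
  next
    case (Some c)
    then have ic: "Inv w c" "halted Mach c \<or> t \<le> moves c" using Suc by auto
    show ?thesis
    proof (cases "halted Mach c")
      case True then show ?thesis using Some ic by simp
    next
      case False
      have "stepOK w c" using ok_all ic False by blast
      then show ?thesis using Some False ic unfolding stepOK_def
        by (auto split: option.splits)
    qed
  qed
qed

lemma I9E: assumes "I9 w c"
  obtains (e) "w = []" "dj c = 1" "dk c = 0" "src c = mark 0" "runlen c = (\<lambda>_. 0)" "ntcount c = e0" "moves c = 2"
  | (b) n m k b where "1 \<le> n" "1 \<le> m" "w = Lw n m" "1 \<le> k" "k \<le> n" "dj c = b + 1" "b + k * n = m"
      "dk c + k = n" "b \<le> dk c" "src c = mark 1" "runlen c = (\<lambda>x. if x = 1 then 1 else 0)"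
      "ntcount c = (\<lambda>x. if x = 0 then 2 else 0)"
      "moves c + 4 * (n + 1) \<le> 5 + 3 * (n + m) + 2 * n + k * (4 * n + 4)"
  using assms unfolding I9_def by auto

lemma moves_bound: assumes "Inv w c" shows "moves c \<le> 20 * (length w + 1)^2"
proof -
  define N where "N = length w"
  have sq: "20 * (N + 1)^2 = 20 * (N * N) + 40 * N + 20" by (simp add: power2_eq_square algebra_simps)
  have kb: "k * (4 * n + 4) \<le> 4 * (N * N) + 8 * N + 4" if "k \<le> n + 1" "n \<le> N" for k n
  proof -
    have "k * (4 * n + 4) \<le> (N + 1) * (4 * N + 4)" using that by (intro mult_le_mono) auto
    then show ?thesis by (simp add: algebra_simps)
  qed
  have "moves c \<le> 20 * (N * N) + 40 * N + 20"
    using assms unfolding Inv_def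
  proof (elim disjE exE)
    assume "I0 c" then show ?thesis by (simp add: I0_def init_conf_def)
  next
    assume "I1 c" then show ?thesis by (simp add: I1_def)
  next
    fix i assume "I2 w c i" then show ?thesis by (simp add: I2_def N_def)
  next
    fix n j assume "I3 w c n j" then show ?thesis by (simp add: I3_def N_def)
  next
    fix n m h assume "I4 w c n m h" then show ?thesis by (simp add: I4_def N_def)
  next
    fix n m k h assume a: "I5 w c n m k h"
    have e: "moves c + 2 * h + 4 * (n + 1) \<le> 2 + 3 * (n + m) + 2 * n + k * (4 * n + 4)" "n + m = N" "k \<le> n + 1" using a by (auto simp: I5_def N_def)
    have "k * (4 * n + 4) \<le> 4 * (N * N) + 8 * N + 4" by (rule kb) (use e in auto)
    then show ?thesis using e unfolding distrib_left by linarith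
  next
    fix n m k assume a: "I6 w c n m k"
    have e: "moves c + 4 * (n + 1) \<le> 3 + 3 * (n + m) + 2 * n + k * (4 * n + 4)" "n + m = N" "k \<le> n + 1" using a by (auto simp: I6_def N_def)
    have "k * (4 * n + 4) \<le> 4 * (N * N) + 8 * N + 4" by (rule kb) (use e in auto)
    then show ?thesis using e unfolding distrib_left by linarith
  next
    fix n m k h assume a: "I7 w c n m k h"
    have e: "moves c + 4 * (n + 1) \<le> 3 + 3 * (n + m) + 2 * n + k * (4 * n + 4) + h" "n + m = N" "k \<le> n + 1" "h \<le> n + 1" using a by (auto simp: I7_def N_def)
    have "k * (4 * n + 4) \<le> 4 * (N * N) + 8 * N + 4" by (rule kb) (use e in auto)
    then show ?thesis using e unfolding distrib_left by linarith
  next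
    fix n m k assume a: "I8 w c n m k"
    have e: "moves c + 4 * (n + 1) \<le> 4 + 3 * (n + m) + 2 * n + k * (4 * n + 4)" "n + m = N" "k \<le> n + 1" using a by (auto simp: I8_def N_def)
    have "k * (4 * n + 4) \<le> 4 * (N * N) + 8 * N + 4" by (rule kb) (use e in auto)
    then show ?thesis using e unfolding distrib_left by linarith
  next
    assume a: "I9 w c"
    then show ?thesis
    proof (cases rule: I9E)
      case (b n m k b)
      have e: "n + m = N" "k \<le> n + 1" using b by (auto simp: N_def)
      have "k * (4 * n + 4) \<le> 4 * (N * N) + 8 * N + 4" by (rule kb) (use e b in auto)
      then show ?thesis using e b(13) unfolding distrib_left by linarith
    qed simp
  next
    assume "I10 w c" then show ?thesis by (simp add: I10_def N_def)
  qed
  then show ?thesis using sq N_def by simp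
qed

lemma st_Inv: "Inv w c \<Longrightarrow> st c = 9 \<Longrightarrow> I9 w c"
  "Inv w c \<Longrightarrow> st c = 10 \<Longrightarrow> I10 w c"
  unfolding Inv_def I0_def init_conf_def I1_def I2_def I3_def I4_def I5_def I6_def I7_def I8_def I9_def I10_def
  by auto

lemma detect_m1: "src c = mark 1 \<Longrightarrow> detect Mach n c \<longleftrightarrow> \<bar>2 - int (dj c)\<bar> \<le> int (dk c)"
  using detect_mark[of c 1 n] sees1[of c] by simp

lemma acc_L: assumes "Inv w c" "halted Mach c" "w \<in> Lsq"
  shows "st c \<in> Acc Mach \<and> \<not> detect Mach (length w) c \<and> final_ok Mach c"
proof -
  have s: "st c = 9 \<or> st c = 10" using assms(2) by (simp add: halted_iff)
  have "st c \<noteq> 10" using st_Inv(2)[OF assms(1)] assms(3) by (auto simp: I10_def)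
  then have s9: "st c = 9" using s by simp
  then have "I9 w c" using st_Inv(1)[OF assms(1)] by simp
  then show ?thesis
  proof (cases rule: I9E)
    case e
    then show ?thesis using s9 detect_cm[of c] by (simp add: cm_def final_ok_def)
  next
    case (b n m k b)
    obtain n' where "w = Lw n' (n' * n')" using assms(3) unfolding Lsq_iff by blast
    then have mn: "m = n * n" using b Lw_inj by metis
    have "dk c = 0"
    proof (rule ccontr)
      assume "dk c \<noteq> 0"
      define d where "d = dk c"
      have "b + k * (d + k) = (d + k) * (d + k)" using b mn d_def by simp
      then have "b = d * d + d * k" by (simp add: algebra_simps)
      moreover have "d * k \<ge> d" using b by simp
      moreover have "d * d \<ge> 1" using \<open>dk c \<noteq> 0\<close> d_def by simp
      ultimately show False using b d_def by linarith
    qed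
    then have "b = 0" using b by simp
    then show ?thesis using b s9 detect_m1[of c] \<open>dk c = 0\<close> by (simp add: final_ok_def)
  qed
qed

lemma rej: assumes "Inv w c" "st c = 9" "\<not> detect Mach (length w) c" shows "w \<in> Lsq"
proof -
  have "I9 w c" using st_Inv(1)[OF assms(1,2)] .
  then show ?thesis
  proof (cases rule: I9E)
    case e then show ?thesis unfolding Lsq_iff by (auto simp: Lw_def)
  next
    case (b n m k b)
    have "\<not> \<bar>2 - int (dj c)\<bar> \<le> int (dk c)" using assms(3) detect_m1[of c] b by simp
    then have "b = 0 \<and> dk c = 0" using b by auto
    then have "k = n" "m = n * n" using b by auto
    then have "w = Lw n (n * n)" using b by simp
    then show ?thesis unfolding Lsq_iff by blast
  qed
qed


lemma reach_halt:
  fixes w :: "ab list"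
  defines "t \<equiv> 20 * (length w + 1)^2 + 1"
  shows "(exec Mach w t = None \<and> w \<notin> Lsq) \<or> (\<exists>c. exec Mach w t = Some c \<and> halted Mach c \<and> Inv w c)"
proof (cases "exec Mach w t")
  case None then show ?thesis using exec_inv[of w t] by simp
next
  case (Some c)
  then have i: "Inv w c" "halted Mach c \<or> t \<le> moves c" using exec_inv[of w t] by auto
  have "moves c \<le> 20 * (length w + 1)^2" using moves_bound i(1) by blast
  then have "halted Mach c" using i(2) t_def by linarith
  then show ?thesis using Some i by blast
qed

lemma halts_all: "halts Mach w"
  using reach_halt[of w] unfolding halts_def by blast

theorem theorem6:
  shows "\<exists>M :: ab oia. wf_oia M \<and> recognizes M Lsq
           \<and> (\<exists>C::real. time_bounded M (\<lambda>n. C * (real n + 1) ^ 3))"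
proof (intro exI[of _ Mach] conjI)
  show "wf_oia Mach" by (rule wf_Mach)
  show "recognizes Mach Lsq"
    unfolding recognizes_def
  proof (intro allI conjI impI)
    fix w assume L: "w \<in> Lsq"
    then obtain c t where c: "exec Mach w t = Some c" "halted Mach c" "Inv w c"
      using reach_halt[of w] by blast
    then show "accepts Mach w" using acc_L[OF c(3) c(2) L] unfolding accepts_def by blast
  next
    fix w assume "w \<notin> Lsq"
    show "halts Mach w" by (rule halts_all)
    show "\<not> accepts Mach w"
    proof
      assume "accepts Mach w"
      then obtain t c where c: "exec Mach w t = Some c" "st c \<in> Acc Mach" "\<not> detect Mach (length w) c"
        unfolding accepts_def by blast
      have "Inv w c" using exec_inv[of w t] c(1) by simp
      then have "w \<in> Lsq" using rej c by simp
      then show False using \<open>w \<notin> Lsq\<close> by simp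
    qed
  qed
  show "\<exists>C::real. time_bounded Mach (\<lambda>n. C * (real n + 1) ^ 3)"
  proof (rule exI[of _ 20])
    show "time_bounded Mach (\<lambda>n. 20 * (real n + 1) ^ 3)"
      unfolding time_bounded_def
    proof (intro allI conjI impI)
      fix w show "halts Mach w" by (rule halts_all)
      fix t c assume "exec Mach w t = Some c"
      then have "Inv w c" using exec_inv[of w t] by simp
      then have "moves c \<le> 20 * (length w + 1)^2" by (rule moves_bound)
      also have "\<dots> \<le> 20 * (length w + 1)^3"
        by (intro mult_le_mono2 power_increasing) auto
      finally have "real (moves c) \<le> real (20 * (length w + 1)^3)" by (rule of_nat_mono)
      then show "real (moves c) \<le> 20 * (real (length w) + 1) ^ 3" by (simp add: add.commute)
    qed
  qed
qed

end
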